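(* Let $b>1$ be an integer, let $H$ be a generalized $b$-happy function with digit mean $\mu$ and digit standard deviation $\sigma$, and let $C\subseteq\mathbb{N}$. Suppose $I$ is an $n$-strict interval with type-$C$ density $d$, where the positive integer $n$ satisfies bound (B): (B1) $4\left(1+3\mu+\sqrt{2}\,\sigma\, b^{5n/8}\right)\le b^{n-1}$, (B2) $\sqrt{3\mu b}\,\sigma\le b^{3n/8}$, (B3) $4\mu\left(3\mu+1+b^{3n/4}+2\sigma\mu^{-1/2}b^{5n/8}\right)\le b^{n-1}$. Then there exist an integer $n_2\ge \frac{b^{n-1}}{\mu}$ and an $n_2$-strict interval $I_2$ whose type-$C$ density is at least $$d\left(1-b^{-n/4}\right)\left(1-\frac{2\sigma}{\sqrt{\mu}}b^{-n/8}\right).$$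
   Context: A generalized $b$-happy function: fix an integer $b>1$ and non-negative integers $h(0),\dots,h(b-1)$ with $h(0)=0$, $h(1)=1$; for $n=\sum_{i=0}^k a_ib^i$ in base $b$, $H(n)=\sum_{i=0}^k h(a_i)$. Digit mean $\mu=\frac1b\sum_{j=0}^{b-1}h(j)$, digit variance $\sigma^2=\frac1b\sum_{j=0}^{b-1}(h(j)-\mu)^2$. An integer $n$ is type-$C$ if $H^k(n)\in C$ for some integer $k\ge0$. An integer interval $[a,c]$ is the set of integers $x$ with $a\le x\le c$; $|I|$ is its cardinality. The type-$C$ density of a finite nonempty integer interval $I$ is $|\{n\in I:n\text{ type-}C\}|/|I|$. For a positive integer $m$, an integer interval $I$ is $m$-strict if $I\subseteq[b^{m-1},b^m-1]$ and $|I|=b^{3m/4}$. *)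

theory Defs
  imports Complex_Main
begin

text \<open>Since h 0 = 0, summing over
  the positions 0..n (which include all digits of n since n < b^(n+1)) is exact.\<close>

definition gen_happy :: "nat \<Rightarrow> (nat \<Rightarrow> nat) \<Rightarrow> nat \<Rightarrow> nat" where
  "gen_happy b h n = (\<Sum>i\<le>n. h (n div b ^ i mod b))"

definition is_happy_digit_fun :: "nat \<Rightarrow> (nat \<Rightarrow> nat) \<Rightarrow> bool" where
  "is_happy_digit_fun b h \<longleftrightarrow> b > 1 \<and> h 0 = 0 \<and> h 1 = 1"

definition digit_mean :: "nat \<Rightarrow> (nat \<Rightarrow> nat) \<Rightarrow> real" where
  "digit_mean b h = (1 / real b) * (\<Sum>j<b. real (h j))"

definition digit_sd :: "nat \<Rightarrow> (nat \<Rightarrow> nat) \<Rightarrow> real" where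
  "digit_sd b h = sqrt ((1 / real b) * (\<Sum>j<b. (real (h j) - digit_mean b h)^2))"

definition typeC :: "nat \<Rightarrow> (nat \<Rightarrow> nat) \<Rightarrow> nat set \<Rightarrow> nat \<Rightarrow> bool" where
  "typeC b h C n \<longleftrightarrow> (\<exists>k. (gen_happy b h ^^ k) n \<in> C)"

definition typeC_density :: "nat \<Rightarrow> (nat \<Rightarrow> nat) \<Rightarrow> nat set \<Rightarrow> nat set \<Rightarrow> real" where
  "typeC_density b h C I = real (card {n \<in> I. typeC b h C n}) / real (card I)"

definition int_interval :: "nat set \<Rightarrow> bool" where
  "int_interval I \<longleftrightarrow> (\<exists>a c. I = {a..c})"

definition strict_interval :: "nat \<Rightarrow> nat \<Rightarrow> nat set \<Rightarrow> bool" where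
  "strict_interval b m I \<longleftrightarrow> m > 0 \<and> int_interval I \<and> I \<subseteq> {b^(m-1) .. b^m - 1}
     \<and> real (card I) = real b powr (3 * real m / 4)"

end

theory Submission
  imports Defs
begin


definition FF :: "nat \<Rightarrow> (nat \<Rightarrow> nat) \<Rightarrow> nat \<Rightarrow> nat \<Rightarrow> nat" where
  "FF b h K x = (\<Sum>i<K. h (x div b^i mod b))"

lemma digit_low:
  fixes x b i k :: nat
  assumes "b > 1" "i < k"
  shows "(x mod b^k) div b^i mod b = x div b^i mod b"
proof -
  have e: "b^k = b^i * b^(k-i)" using assms by (simp add: power_add[symmetric])
  have "(x mod b^k) div b^i = x div b^i mod b^(k-i)"
    unfolding e mod_mult2_eq using assms by simp
  moreover have "b dvd b^(k-i)" using assms by simp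
  ultimately show ?thesis by (simp add: mod_mod_cancel)
qed

lemma FF_split:
  assumes "b > 1"
  shows "FF b h (k+m) x = FF b h k (x mod b^k) + FF b h m (x div b^k)"
proof -
  have "FF b h (k+m) x = (\<Sum>i<k. h (x div b^i mod b)) + (\<Sum>i<m. h (x div b^(k+i) mod b))"
    unfolding FF_def by (induction m) (simp_all add: ac_simps)
  also have "(\<Sum>i<k. h (x div b^i mod b)) = FF b h k (x mod b^k)"
    unfolding FF_def using digit_low[OF assms] by (intro sum.cong) auto
  also have "(\<Sum>i<m. h (x div b^(k+i) mod b)) = FF b h m (x div b^k)"
    unfolding FF_def by (simp add: power_add div_mult2_eq)
  finally show ?thesis .
qed

lemma FF_Suc:
  assumes "b > 1"
  shows "FF b h (Suc k) x = h (x mod b) + FF b h k (x div b)"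
  using FF_split[OF assms, of h 1 k x] by (simp add: FF_def)

lemma FF_zero: "h 0 = 0 \<Longrightarrow> FF b h k 0 = 0"
  by (simp add: FF_def)

lemma FF_stable_le:
  assumes "b > 1" "h 0 = 0" "x < b^K1" "K1 \<le> K2"
  shows "FF b h K2 x = FF b h K1 x"
proof -
  have "FF b h (K1 + (K2-K1)) x = FF b h K1 x"
    using FF_split[OF assms(1), of h K1 "K2-K1" x] assms by (simp add: FF_zero)
  thus ?thesis using assms by simp
qed

lemma FF_stable:
  assumes "b > 1" "h 0 = 0" "x < b^K1" "x < b^K2"
  shows "FF b h K2 x = FF b h K1 x"
  using FF_stable_le[of b h x K1 K2] FF_stable_le[of b h x K2 K1] assms
  by (cases "K1 \<le> K2") auto

lemma gen_happy_FF:
  assumes "b > 1" "h 0 = 0" "x < b^K"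
  shows "gen_happy b h x = FF b h K x"
proof -
  have "x < 2^x" by (rule less_exp)
  also have "2^x \<le> b^x" using assms by (simp add: power_mono)
  also have "\<dots> < b^Suc x" using assms by simp
  finally have "x < b^Suc x" .
  hence "FF b h (Suc x) x = FF b h K x" using FF_stable[of b h x K "Suc x"] assms by blast
  hence "FF b h K x = FF b h (Suc x) x" by simp
  thus ?thesis unfolding gen_happy_def FF_def by (simp add: lessThan_Suc_atMost)
qed

fun rep :: "nat \<Rightarrow> nat \<Rightarrow> nat" where
  "rep b 0 = 0" | "rep b (Suc j) = 1 + b * rep b j"

lemma rep_less: "b > 1 \<Longrightarrow> rep b j < b^j"
proof (induction j)
  case 0 then show ?case by simp
next
  case (Suc j)
  then have "rep b j + 1 \<le> b^j" by simp
  hence "b * (rep b j + 1) \<le> b * b^j" by (rule mult_le_mono2)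
  hence "b * rep b j + b \<le> b * b^j" by (simp add: distrib_left)
  thus ?case using Suc.prems by simp
qed

lemma FF_rep:
  assumes "b > 1" "h 1 = 1"
  shows "FF b h j (rep b j) = j"
proof (induction j)
  case 0 then show ?case by (simp add: FF_def)
next
  case (Suc j)
  have m0: "(1 + b * rep b j) mod b = 1 mod b" by (rule mod_mult_self2)
  have m: "(1 + b * rep b j) mod b = 1" using m0 assms by simp
  have d0: "(1 + b * rep b j) div b = rep b j + 1 div b" by (rule div_mult_self2) (use assms in simp)
  have d: "(1 + b * rep b j) div b = rep b j" using d0 assms by simp
  show ?case using FF_Suc[OF assms(1)] m d Suc assms by simp
qed

lemma sum_shift_lt: fixes n c :: nat shows "(\<Sum>j<n. g (c + j)) = sum g {c..<c+n}"
  by (induction n) (simp_all add: ac_simps)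

lemma sum_regroup: fixes N b :: nat and g :: "nat \<Rightarrow> 'a::comm_monoid_add" shows "(\<Sum>y<N*b. g y) = (\<Sum>m<N. \<Sum>j<b. g (m*b + j))"
  using sum.nat_group[of "\<lambda>y. g y" b N] by (simp add: sum_shift_lt)

lemma FF_digit:
  assumes "b > 1" "j < b"
  shows "FF b h (Suc k) (m*b + j) = h j + FF b h k m"
  using FF_Suc[OF assms(1), of h k "m*b+j"] assms by simp

lemma mean_zero:
  assumes "b > 0"
  shows "(\<Sum>j<b. real (h j) - digit_mean b h) = 0"
  using assms by (simp add: sum_subtractf digit_mean_def)

lemma moments:
  fixes h :: "nat \<Rightarrow> nat" and k :: nat and \<mu> v :: real
  assumes "b > 1"
  defines "\<mu> \<equiv> digit_mean b h"
  defines "v \<equiv> (1 / real b) * (\<Sum>j<b. (real (h j) - \<mu>)^2)"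
  shows "(\<Sum>y<b^k. real (FF b h k y) - k*\<mu>) = 0
       \<and> (\<Sum>y<b^k. (real (FF b h k y) - k*\<mu>)^2) = k * b^k * v"
proof (induction k)
  case 0
  then show ?case by (simp add: FF_def)
next
  case (Suc k)
  define A where "A j = real (h j) - \<mu>" for j
  define B where "B m = real (FF b h k m) - k*\<mu>" for m
  have SA: "(\<Sum>j<b. A j) = 0" unfolding A_def \<mu>_def using mean_zero assms by simp
  have SA2: "(\<Sum>j<b. (A j)^2) = b * v" unfolding A_def v_def using assms by simp
  have SB: "(\<Sum>m<b^k. B m) = 0" using Suc unfolding B_def by simp
  have SB2: "(\<Sum>m<b^k. (B m)^2) = k * b^k * v" using Suc unfolding B_def by simp
  have val: "real (FF b h (Suc k) (m*b + j)) - real (Suc k) * \<mu> = A j + B m" if "j < b" for m j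
    using FF_digit[OF assms(1) that, of h k m] unfolding A_def B_def by (simp add: algebra_simps)
  have s1: "(\<Sum>y<b^Suc k. real (FF b h (Suc k) y) - real (Suc k)*\<mu>) = (\<Sum>m<b^k. \<Sum>j<b. A j + B m)"
    unfolding power_Suc2 sum_regroup using val by (intro sum.cong refl) auto
  have s2: "(\<Sum>y<b^Suc k. (real (FF b h (Suc k) y) - real (Suc k)*\<mu>)^2) = (\<Sum>m<b^k. \<Sum>j<b. (A j + B m)^2)"
    unfolding power_Suc2 sum_regroup using val by (intro sum.cong refl) auto
  have i1: "(\<Sum>j<b. A j + B m) = b * B m" for m using SA by (simp add: sum.distrib)
  have i2: "(\<Sum>j<b. (A j + B m)^2) = b * v + b * (B m)^2" for m
  proof -
    have "(\<Sum>j<b. (A j + B m)^2) = (\<Sum>j<b. (A j)^2) + 2 * B m * (\<Sum>j<b. A j) + b * (B m)^2"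
      by (simp add: power2_sum sum.distrib sum_distrib_left sum_distrib_right algebra_simps)
    thus ?thesis using SA SA2 by simp
  qed
  have "(\<Sum>y<b^Suc k. real (FF b h (Suc k) y) - real (Suc k)*\<mu>) = 0"
    unfolding s1 i1 using SB by (simp add: sum_distrib_left[symmetric])
  moreover have "(\<Sum>y<b^Suc k. (real (FF b h (Suc k) y) - real (Suc k)*\<mu>)^2) = Suc k * b^Suc k * v"
    unfolding s2 i2 using SB2 by (simp add: sum.distrib sum_distrib_left[symmetric] algebra_simps)
  ultimately show ?case by simp
qed

lemma cheb:
  fixes f :: "nat \<Rightarrow> real"
  assumes "finite S" "t > 0"
  shows "real (card {y\<in>S. t \<le> \<bar>f y\<bar>}) * t^2 \<le> (\<Sum>y\<in>S. (f y)^2)"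
proof -
  let ?B = "{y\<in>S. t \<le> \<bar>f y\<bar>}"
  have "real (card ?B) * t^2 = (\<Sum>y\<in>?B. t^2)" by simp
  also have "\<dots> \<le> (\<Sum>y\<in>?B. (f y)^2)"
  proof (rule sum_mono)
    fix y assume "y \<in> ?B"
    hence "t \<le> \<bar>f y\<bar>" by simp
    thus "t^2 \<le> (f y)^2" using assms(2) by (metis abs_le_square_iff abs_of_pos)
  qed
  also have "\<dots> \<le> (\<Sum>y\<in>S. (f y)^2)"
    by (rule sum_mono2) (use assms in auto)
  finally show ?thesis .
qed

lemma sqrt_mono_bound:
  fixes a0 a K R :: real
  assumes "0 < a0" "a0 \<le> a" "0 \<le> K" "a0 - K * sqrt a0 \<ge> R" "R \<ge> 0"
  shows "a - K * sqrt a \<ge> R"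
proof -
  define r where "r = sqrt a0"
  define s where "s = sqrt a"
  have r0: "r > 0" using assms r_def by simp
  have rs: "r \<le> s" unfolding r_def s_def using assms by simp
  have a0: "a0 = r^2" unfolding r_def using assms by simp
  have a: "a = s^2" unfolding s_def using assms by simp
  have rr: "r * (r - K) = a0 - K * r" using a0 by (simp add: power2_eq_square algebra_simps)
  have "r * (r - K) \<ge> 0" using assms(4,5) rr unfolding r_def by linarith
  hence rK: "r \<ge> K" using r0 by (simp add: zero_le_mult_iff)
  have "s * (s - K) - r * (r - K) = (s - r) * (s + r - K)" by (simp add: algebra_simps)
  also have "\<dots> \<ge> 0" using rs rK assms(3) r0 by (intro mult_nonneg_nonneg) auto
  finally have "s * (s - K) \<ge> r * (r - K)" by simp
  moreover have "s * (s - K) = a - K * sqrt a" using a unfolding s_def[symmetric] by (simp add: power2_eq_square algebra_simps)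
  ultimately show ?thesis using assms(4,5) rr unfolding r_def by linarith
qed

lemma card_open_ivl:
  fixes u v :: real
  assumes "0 \<le> u" "u \<le> v"
  shows "real (card {s::nat. u < real s \<and> real s < v}) < v - u + 1"
proof -
  have fu: "floor u \<ge> 0" using assms by simp
  have cv: "ceiling v \<ge> 0" using assms by simp
  have sub: "{s::nat. u < real s \<and> real s < v} \<subseteq> {nat (floor u) + 1 ..< nat (ceiling v)}"
  proof
    fix s :: nat assume "s \<in> {s::nat. u < real s \<and> real s < v}"
    hence h: "u < real s" "real s < v" by auto
    have "floor u < int s" using h(1) by (simp add: floor_less_iff)
    hence "nat (floor u) < s" using assms by (simp add: nat_less_iff)
    moreover have "int s < ceiling v" using h(2) by (simp add: less_ceiling_iff)
    ultimately show "s \<in> {nat (floor u) + 1 ..< nat (ceiling v)}" by auto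
  qed
  have "card {s::nat. u < real s \<and> real s < v} \<le> card {nat (floor u) + 1 ..< nat (ceiling v)}"
    by (rule card_mono[OF _ sub]) simp
  also have "\<dots> = nat (ceiling v) - (nat (floor u) + 1)" by simp
  finally have c: "card {s::nat. u < real s \<and> real s < v} \<le> nat (ceiling v) - (nat (floor u) + 1)" .
  have e1: "real (nat (ceiling v) - (nat (floor u) + 1)) \<le> max 0 (real_of_int (ceiling v) - real_of_int (floor u) - 1)"
    using fu cv by (cases "nat (floor u) + 1 \<le> nat (ceiling v)") (auto simp: of_nat_diff)
  have x1: "real_of_int (ceiling v) < v + 1" using ceiling_correct[of v] by linarith
  have x2: "u < real_of_int (floor u) + 1" using floor_correct[of u] by linarith
  have e2: "max 0 (real_of_int (ceiling v) - real_of_int (floor u) - 1) < v - u + 1"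
  proof -
    have "real_of_int (ceiling v) - real_of_int (floor u) - 1 < v - u + 1" using x1 x2 by linarith
    moreover have "0 < v - u + 1" using assms by linarith
    ultimately show ?thesis by (simp only: max_less_iff_conj)
  qed
  have "real (card {s::nat. u < real s \<and> real s < v}) \<le> real (nat (ceiling v) - (nat (floor u) + 1))"
    using c by (simp only: of_nat_le_iff)
  thus ?thesis using e1 e2 by linarith
qed

lemma sqrt_pow_powr:
  assumes "x > 0"
  shows "sqrt (x ^ n) = x powr (real n / 2)"
proof -
  have "x ^ n = x powr real n" using assms by (simp add: powr_realpow)
  hence "sqrt (x ^ n) = (x powr real n) powr (1/2)" using assms by (simp add: powr_half_sqrt)
  also have "\<dots> = x powr (real n / 2)" by (simp add: powr_powr)
  finally show ?thesis .
qed

lemma PF1: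
  assumes "b > (1::nat)" "n > 0"
  shows "sqrt (real b ^ (n-1)) * real b powr (real n / 8) = real b powr (5 * real n / 8) / sqrt (real b)"
proof -
  have b0: "real b > 0" using assms by simp
  have "sqrt (real b ^ (n-1)) = real b powr (real (n-1) / 2)" using sqrt_pow_powr[OF b0] .
  also have "real (n-1) = real n - 1" using assms by simp
  finally have e1: "sqrt (real b ^ (n-1)) = real b powr ((real n - 1) / 2)" .
  have e2: "sqrt (real b) = real b powr (1/2)" using b0 by (simp add: powr_half_sqrt)
  have "real b powr ((real n - 1) / 2) * real b powr (real n / 8) = real b powr ((real n - 1) / 2 + real n / 8)"
    by (simp add: powr_add)
  also have "(real n - 1) / 2 + real n / 8 = 5 * real n / 8 - 1/2" by (simp add: field_simps)
  also have "real b powr (5 * real n / 8 - 1/2) = real b powr (5 * real n / 8) / real b powr (1/2)"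
    by (simp add: powr_diff)
  finally have e3: "real b powr ((real n - 1) / 2) * real b powr (real n / 8) = real b powr (5 * real n / 8) / real b powr (1/2)" .
  show ?thesis by (simp only: e1 e2 e3)
qed

lemma PF2:
  assumes "b > (1::nat)"
  shows "sqrt (real b ^ n) * real b powr (real n / 8) / real b powr (3 * real n / 4) = real b powr (- real n / 8)"
proof -
  have b0: "real b > 0" using assms by simp
  have "sqrt (real b ^ n) * real b powr (real n / 8) / real b powr (3 * real n / 4)
      = real b powr (real n / 2 + real n / 8 - 3 * real n / 4)"
    by (simp only: sqrt_pow_powr[OF b0, of n] powr_add[symmetric] powr_diff[symmetric])
  also have "real n / 2 + real n / 8 - 3 * real n / 4 = - real n / 8" by (simp add: field_simps)
  finally show ?thesis .
qed

lemma PF3: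
  assumes "b > (1::nat)"
  shows "(real b powr (real n / 8))^2 = real b powr (real n / 4)"
proof -
  have "(real b powr (real n / 8))^2 = real b powr (real n / 8 * 2)"
    using assms by (simp add: powr_realpow[symmetric] powr_powr)
  also have "real n / 8 * 2 = real n / 4" by simp
  finally show ?thesis .
qed

lemma PF4:
  assumes "b > (1::nat)"
  shows "real (b^(3*m)) = real b powr (3 * real (4*m) / 4)"
proof -
  have "3 * real (4*m) / 4 = real (3*m)" by simp
  moreover have "real b powr real (3*m) = real b ^ (3*m)" using assms by (intro powr_realpow) simp
  ultimately show ?thesis by simp
qed

lemma PF5:
  assumes "(x::real) > 0" shows "x powr (-1/2) = 1 / sqrt x"
proof -
  have "x powr (-1/2) = 1 / x powr (1/2)" using powr_minus_divide[of x "1/2"] by simp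
  thus ?thesis using assms by (simp only: powr_half_sqrt less_imp_le)
qed


lemma card_filter_sum:
  assumes "finite A"
  shows "card {x\<in>A. P x} = (\<Sum>x\<in>A. if P x then 1 else (0::nat))"
  unfolding card_eq_sum using sum.inter_filter[OF assms, of "\<lambda>_. 1::nat" P] by simp

lemma typeC_step:
  assumes "typeC b h C (gen_happy b h x)"
  shows "typeC b h C x"
proof -
  obtain j where "(gen_happy b h ^^ j) (gen_happy b h x) \<in> C" using assms unfolding typeC_def by blast
  hence "(gen_happy b h ^^ Suc j) x \<in> C" by (simp only: funpow_Suc_right comp_def)
  thus ?thesis unfolding typeC_def by blast
qed

lemma div_le_self:
  fixes x s :: real
  assumes "0 \<le> x" "1 \<le> s"
  shows "x / s \<le> x"
proof -
  have "x / s \<le> x / 1" by (rule divide_left_mono) (use assms in auto)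
  thus ?thesis by simp
qed

lemma ratio_bound:
  fixes L t :: real
  assumes "0 < L" "0 \<le> t"
  shows "1 - 2*t/L \<le> L/(L+2*t)"
proof -
  have "(L - 2*t) * (L + 2*t) \<le> L * L" by (simp add: algebra_simps)
  hence "(L - 2*t) / L \<le> L / (L + 2*t)" using assms by (simp add: divide_simps)
  moreover have "1 - 2*t/L = (L - 2*t)/L" using assms by (simp add: field_simps)
  ultimately show ?thesis by simp
qed

lemma final_ineq:
  fixes dens N L cW cG B d \<beta> X :: real
  assumes "dens \<ge> N * cG / (cW * B)" "N \<ge> 0" "L > 0" "cW > 0" "B > 0"
    "cG / B \<ge> 1 - \<beta>" "L / cW \<ge> 1 - X" "\<beta> \<le> 1" "d = N / L" "dens \<ge> 0"
  shows "dens \<ge> d * (1 - \<beta>) * (1 - X)"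
proof (cases "X \<le> 1")
  case True
  have d0: "d \<ge> 0" using assms by simp
  have e: "N * cG / (cW * B) = d * ((L / cW) * (cG / B))" using assms by (simp add: field_simps)
  have "d * (1 - \<beta>) * (1 - X) = d * ((1 - X) * (1 - \<beta>))" by (simp add: algebra_simps)
  also have "\<dots> \<le> d * ((L / cW) * (cG / B))"
    using assms True d0 by (intro mult_left_mono mult_mono) auto
  finally show ?thesis using assms(1) e by simp
next
  case False
  have "d \<ge> 0" using assms by simp
  hence "d * (1 - \<beta>) \<ge> 0" using assms by simp
  hence "d * (1 - \<beta>) * (1 - X) \<le> 0" using False by (simp add: mult_nonneg_nonpos)
  thus ?thesis using assms(10) by linarith
qed

theorem theorem3p4:
  fixes b :: nat and h :: "nat \<Rightarrow> nat" and C :: "nat set" and I :: "nat set"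
    and n :: nat and d :: real
  assumes hb: "is_happy_digit_fun b h"
    and hn: "n > 0"
    and hI: "strict_interval b n I"
    and hd: "d = typeC_density b h C I"
    and B1: "4 * (1 + 3 * digit_mean b h + sqrt 2 * digit_sd b h * real b powr (5 * real n / 8))
               \<le> real b ^ (n - 1)"
    and B2: "sqrt (3 * digit_mean b h * real b) * digit_sd b h \<le> real b powr (3 * real n / 8)"
    and B3: "4 * digit_mean b h * (3 * digit_mean b h + 1 + real b powr (3 * real n / 4)
               + 2 * digit_sd b h * digit_mean b h powr (-1/2) * real b powr (5 * real n / 8))
               \<le> real b ^ (n - 1)"
  shows "\<exists>n2 :: nat. \<exists>I2. real n2 \<ge> real b ^ (n - 1) / digit_mean b h
           \<and> strict_interval b n2 I2
           \<and> typeC_density b h C I2 \<ge>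
               d * (1 - real b powr (- real n / 4))
                 * (1 - 2 * digit_sd b h / sqrt (digit_mean b h) * real b powr (- real n / 8))"
proof -
  have b1: "b > 1" and h0: "h 0 = 0" and h1: "h 1 = 1" using hb by (auto simp: is_happy_digit_fun_def)
  have b0: "real b > 0" using b1 by simp
  define \<mu> where "\<mu> = digit_mean b h"
  define \<sigma> where "\<sigma> = digit_sd b h"
  define v where "v = (1 / real b) * (\<Sum>j<b. (real (h j) - \<mu>)^2)"
  have v0: "v \<ge> 0" unfolding v_def by (simp add: sum_nonneg)
  have \<sigma>v: "\<sigma>^2 = v" and \<sigma>0: "\<sigma> \<ge> 0"
    unfolding \<sigma>_def digit_sd_def \<mu>_def[symmetric] v_def[symmetric] using v0 by auto
  have \<mu>b: "\<mu> * real b = (\<Sum>j<b. real (h j))" unfolding \<mu>_def digit_mean_def using b1 by simp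
  have sumh: "(\<Sum>j<b. real (h j)) \<ge> 1"
  proof -
    have "real (h 1) \<le> (\<Sum>j<b. real (h j))" by (rule member_le_sum) (use b1 in auto)
    thus ?thesis using h1 by simp
  qed
  have \<mu>b1: "\<mu> * real b \<ge> 1" using \<mu>b sumh by simp
  have \<mu>pos: "\<mu> > 0" using \<mu>b1 b0 by (smt (verit) mult_nonpos_nonneg)
  have vpos: "v > 0"
  proof -
    have "(real (h 0) - \<mu>)^2 \<le> (\<Sum>j<b. (real (h j) - \<mu>)^2)" by (rule member_le_sum) (use b1 in auto)
    moreover have "(real (h 0) - \<mu>)^2 > 0" using h0 \<mu>pos by simp
    ultimately have "(\<Sum>j<b. (real (h j) - \<mu>)^2) > 0" by linarith
    thus ?thesis unfolding v_def using b0 by simp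
  qed
  have \<sigma>pos: "\<sigma> > 0" using \<sigma>v vpos \<sigma>0 by (metis less_eq_real_def power_zero_numeral)
  obtain a c where Iac: "I = {a..c}" using hI unfolding strict_interval_def int_interval_def by blast
  have Isub: "I \<subseteq> {b^(n-1)..b^n-1}" and cardI: "real (card I) = real b powr (3*real n/4)"
    using hI unfolding strict_interval_def by auto
  define L where "L = card I"
  have Lr: "real L = real b powr (3*real n/4)" using cardI L_def by simp
  have "real L > 0" unfolding Lr using b0 by simp
  hence Lpos: "L > 0" by simp
  have ac: "a \<le> c" using Lpos unfolding L_def Iac by (cases "a \<le> c") auto
  have Lc: "c = a + L - 1" using ac unfolding L_def Iac by simp
  have aLo: "b^(n-1) \<le> a" and cHi: "c \<le> b^n - 1" using Isub ac unfolding Iac by auto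
  have bn1: "b^n \<ge> 1" using b1 by simp
  have aHi: "a + L \<le> b^n" using cHi Lc Lpos bn1 by linarith
  define G where "G = {x\<in>I. typeC b h C x}"
  define N where "N = card G"
  have dN: "d = real N / real L" unfolding hd typeC_density_def N_def G_def L_def by simp
  define a0 where "a0 = real b ^ (n-1)"
  define Q where "Q = \<sigma> * real b powr (5*real n/8)"
  define cc where "cc = \<sigma> / sqrt \<mu> * real b powr (real n / 8)"
  define t where "t = cc * sqrt (real a)"
  have a0pos: "a0 > 0" unfolding a0_def using b0 by simp
  have a0a: "a0 \<le> real a" unfolding a0_def using aLo by (metis of_nat_le_iff of_nat_power)
  have Q0: "Q \<ge> 0" unfolding Q_def using \<sigma>0 by simp
  have cc0: "cc > 0" unfolding cc_def using \<sigma>pos \<mu>pos b0 by simp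
  have t0: "t \<ge> 0" unfolding t_def using cc0 by simp
  have ca0: "cc * sqrt a0 = Q / sqrt (\<mu> * real b)"
  proof -
    have "cc * sqrt a0 = \<sigma> / sqrt \<mu> * (sqrt (real b ^ (n-1)) * real b powr (real n / 8))"
      unfolding cc_def a0_def by (simp add: algebra_simps)
    also have "\<dots> = \<sigma> / sqrt \<mu> * (real b powr (5 * real n / 8) / sqrt (real b))"
      using PF1[OF b1 hn] by simp
    also have "\<dots> = Q / sqrt (\<mu> * real b)" unfolding Q_def by (simp add: real_sqrt_mult)
    finally show ?thesis .
  qed
  have sq1: "sqrt (\<mu> * real b) \<ge> 1" using \<mu>b1 by simp
  have ca0_le: "cc * sqrt a0 \<le> Q" unfolding ca0 using div_le_self[OF Q0 sq1] .
  have ca0_mu: "\<mu> * (cc * sqrt a0) \<le> sqrt \<mu> * Q"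
  proof -
    have r: "\<mu> = sqrt \<mu> * sqrt \<mu>" using \<mu>pos by simp
    have "\<mu> * (cc * sqrt a0) = (sqrt \<mu> * sqrt \<mu>) * (Q / (sqrt \<mu> * sqrt (real b)))"
      unfolding ca0 real_sqrt_mult using r by simp
    also have "\<dots> = sqrt \<mu> * Q / sqrt (real b)"
      using \<mu>pos b0 by (simp add: field_simps)
    also have "\<dots> \<le> sqrt \<mu> * Q" using b1 Q0 \<mu>pos
      by (intro div_le_self) auto
    finally show ?thesis .
  qed

  have B1': "4 + 12*\<mu> + 4*Q \<le> a0"
  proof -
    have "1 * Q \<le> sqrt 2 * Q" by (rule mult_right_mono) (use Q0 in auto)
    hence "Q \<le> sqrt 2 * \<sigma> * real b powr (5 * real n / 8)"
      unfolding Q_def by (simp add: mult.assoc)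
    thus ?thesis using B1 unfolding \<mu>_def[symmetric] \<sigma>_def[symmetric] a0_def[symmetric] by argo
  qed
  have B3': "12*\<mu>^2 + 4*\<mu> + 4*\<mu>*real L + 8*(sqrt \<mu> * Q) \<le> a0"
  proof -
    have e: "\<mu> powr (-1/2) = 1 / sqrt \<mu>" using PF5 \<mu>pos by simp
    have e2: "\<mu> * (1 / sqrt \<mu>) = sqrt \<mu>" using \<mu>pos by (simp add: real_div_sqrt)
    have "4 * \<mu> * (3 * \<mu> + 1 + real L + 2 * \<sigma> * (1 / sqrt \<mu>) * real b powr (5 * real n / 8))
        = 12*\<mu>^2 + 4*\<mu> + 4*\<mu>*real L + 8*((\<mu> * (1 / sqrt \<mu>)) * Q)"
      unfolding Q_def by (simp add: algebra_simps power2_eq_square)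
    thus ?thesis using B3 unfolding \<mu>_def[symmetric] \<sigma>_def[symmetric] a0_def[symmetric] Lr[symmetric] e e2
      by linarith
  qed
  have A0: "a0 - (cc * (1 + 6*\<mu>)) * sqrt a0 \<ge> 3*\<mu>*real L + 9*\<mu>^2"
  proof -
    have "(cc * (1 + 6*\<mu>)) * sqrt a0 = cc * sqrt a0 + 6 * (\<mu> * (cc * sqrt a0))" by (simp add: algebra_simps)
    moreover have "4*\<mu>*real L = 4*(\<mu>*real L)" "3*\<mu>*real L = 3*(\<mu>*real L)" by simp_all
    ultimately show ?thesis using ca0_le ca0_mu B1' B3' \<mu>pos by linarith
  qed
  have B0: "a0 - (4 * cc) * sqrt a0 \<ge> 12*\<mu>" using ca0_le B1' Q0 by (simp add: algebra_simps)
  have Aa: "real a - (cc * (1 + 6*\<mu>)) * sqrt (real a) \<ge> 3*\<mu>*real L + 9*\<mu>^2"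
    by (rule sqrt_mono_bound[OF a0pos a0a _ A0]) (use cc0 \<mu>pos in auto)
  have Ba: "real a - (4 * cc) * sqrt (real a) \<ge> 12*\<mu>"
    by (rule sqrt_mono_bound[OF a0pos a0a _ B0]) (use cc0 \<mu>pos in auto)
  have A: "real a - t - 6*\<mu>*t \<ge> 3*\<mu>*real L + 9*\<mu>^2" using Aa unfolding t_def by (simp add: algebra_simps)
  have B: "real a - 4*t \<ge> 12*\<mu>" using Ba unfolding t_def by (simp add: algebra_simps)
  have at0: "real a - t \<ge> 0" using B t0 \<mu>pos by linarith
  define m where "m = nat (floor ((real a - t) / (3*\<mu>)))"
  have fl0: "floor ((real a - t) / (3*\<mu>)) \<ge> 0" using at0 \<mu>pos by simp
  have mfl: "real m = real_of_int (floor ((real a - t) / (3*\<mu>)))" unfolding m_def using fl0 by simp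
  have m_le': "real m \<le> (real a - t) / (3*\<mu>)" unfolding mfl by simp
  have m_gt': "(real a - t) / (3*\<mu>) < real m + 1" unfolding mfl by linarith
  have m_le: "3*real m*\<mu> \<le> real a - t" using m_le' \<mu>pos by (simp add: le_divide_eq algebra_simps)
  have m_gt: "real a - t < 3*\<mu>*(real m + 1)" using m_gt' \<mu>pos by (simp add: divide_less_eq algebra_simps)
  have C2: "real a + real L - 1 - 3*real m*\<mu> + t \<le> real m"
  proof -
    have "3*\<mu>*(real L + 2*t + 3*\<mu>) \<le> real a - t" using A by (simp add: algebra_simps power2_eq_square)
    hence "3*\<mu>*(real L + 2*t + 3*\<mu>) < 3*\<mu>*(real m + 1)" using m_gt by linarith
    hence "real L + 2*t + 3*\<mu> < real m + 1" using \<mu>pos by simp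
    thus ?thesis using m_gt by (simp add: algebra_simps)
  qed
  have m4: "4*(\<mu>*real m) > a0"
  proof -
    have "12*(\<mu>*real m) > 3 * real a" using m_gt B by (simp add: algebra_simps)
    thus ?thesis using a0a by linarith
  qed
  have C3: "real (4*m) \<ge> a0 / \<mu>"
  proof -
    have "4*real m * \<mu> > a0" using m4 by (simp add: algebra_simps)
    thus ?thesis using \<mu>pos by (simp add: divide_le_eq algebra_simps)
  qed
  have m1: "m \<ge> 1"
  proof -
    have "\<mu>*real m > 0" using m4 a0pos by linarith
    thus ?thesis using \<mu>pos by (simp add: zero_less_mult_iff)
  qed

  define u where "u = real a - 3*real m*\<mu> - t"
  define w where "w = real a + real L - 1 - 3*real m*\<mu> + t"
  define W where "W = {s::nat. u < real s \<and> real s < w}"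
  have u0: "u \<ge> 0" unfolding u_def using m_le by linarith
  have uw: "u \<le> w" unfolding u_def w_def using Lpos t0 by simp
  have cardW: "real (card W) < real L + 2*t"
    using card_open_ivl[OF u0 uw] unfolding W_def u_def w_def by simp
  have Wb: "1 \<le> s \<and> s \<le> m" if "s \<in> W" for s
  proof -
    have "u < real s" "real s < w" using that unfolding W_def by auto
    thus ?thesis using u0 C2 unfolding w_def by auto
  qed
  have finW: "finite W" by (rule finite_subset[of W "{..m}"]) (use Wb in auto)
  define k where "k = 3*m"
  have km: "real k * \<mu> = 3*real m*\<mu>" unfolding k_def by simp
  define D where "D y = real (FF b h k y) - real k * \<mu>" for y
  define Bad where "Bad = {y\<in>{..<b^k}. t \<le> \<bar>D y\<bar>}"
  define Good where "Good = {..<b^k} - Bad"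
  have Good_iff: "y \<in> Good \<longleftrightarrow> y < b^k \<and> \<bar>D y\<bar> < t" for y
    unfolding Good_def Bad_def by auto
  have "card ({..<b^k} - Bad) = card {..<b^k} - card Bad"
    by (rule card_Diff_subset) (auto simp: Bad_def)
  hence cardGB: "card Good = b^k - card Bad" unfolding Good_def by simp
  have "card Bad \<le> card {..<b^k}" unfolding Bad_def by (rule card_mono) auto
  hence cardB_le: "card Bad \<le> b^k" by simp
  have mom: "(\<Sum>y<b^k. (D y)^2) = real k * real b^k * v"
    using moments[OF b1, of h k] unfolding D_def \<mu>_def v_def by simp
  define bq where "bq = real b powr (real n / 4)"
  have bq1: "bq > 1" unfolding bq_def using b1 hn by simp
  have tsq: "t^2 = v / \<mu> * bq * real a"
  proof -
    have "t^2 = \<sigma>^2 / (sqrt \<mu>)^2 * (real b powr (real n / 8))^2 * (sqrt (real a))^2"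
      unfolding t_def cc_def by (simp add: power_mult_distrib power_divide)
    thus ?thesis using PF3[OF b1, of n] \<sigma>v \<mu>pos unfolding bq_def by simp
  qed
  have tpos: "t > 0" unfolding t_def using cc0 a0a a0pos by simp
  have Bad_bound: "real (card Bad) * bq \<le> real b^k"
  proof -
    have "real (card Bad) * t^2 \<le> (\<Sum>y<b^k. (D y)^2)"
      using cheb[of "{..<b^k}" t D] tpos unfolding Bad_def by simp
    hence "real (card Bad) * (v / \<mu> * bq * real a) \<le> real k * real b^k * v" using mom tsq by simp
    hence "v * (real (card Bad) * bq * real a) \<le> v * (real k * \<mu> * real b^k)"
      using \<mu>pos by (simp add: field_simps)
    hence "real (card Bad) * bq * real a \<le> real k * \<mu> * real b^k" using vpos by simp
    also have "\<dots> \<le> real a * real b^k"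
      using km m_le t0 by (intro mult_right_mono) auto
    finally have "real a * (real (card Bad) * bq) \<le> real a * real b^k" by (simp add: algebra_simps)
    thus ?thesis using a0a a0pos by simp
  qed
  have bqinv: "real b powr (- real n / 4) = 1 / bq" unfolding bq_def by (simp add: powr_minus_divide)
  have Good_bound: "real (card Good) \<ge> real b^k * (1 - real b powr (- real n / 4))"
  proof -
    note bqinv
    moreover have "real (card Bad) \<le> real b^k / bq" using Bad_bound bq1 by (simp add: le_divide_eq)
    ultimately show ?thesis using cardGB cardB_le by (simp add: of_nat_diff algebra_simps)
  qed
  have Good_ne: "Good \<noteq> {}"
  proof -
    have "real b powr (- real n / 4) < 1" unfolding bqinv using bq1 by simp
    hence "real (card Good) > 0" using Good_bound b0
      by (smt (verit) mult_pos_pos zero_less_power)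
    thus ?thesis by auto
  qed

  define P where "P s = b^(m-1) + rep b (s-1)" for s
  have rep_lt: "rep b (s-1) < b^(m-1)" if "s \<in> W" for s
  proof -
    have "rep b (s-1) < b^(s-1)" using rep_less[OF b1] .
    also have "\<dots> \<le> b^(m-1)" using Wb[OF that] b1 by (intro power_increasing) auto
    finally show ?thesis .
  qed
  have P_lo: "b^(m-1) \<le> P s" for s unfolding P_def by simp
  have P_hi: "P s < b^m" if "s \<in> W" for s
  proof -
    have "P s < 2 * b^(m-1)" unfolding P_def using rep_lt[OF that] by simp
    also have "\<dots> \<le> b * b^(m-1)" using b1 by simp
    also have "\<dots> = b^m" using m1 by (simp add: power_eq_if)
    finally show ?thesis .
  qed
  have FF_P: "FF b h m (P s) = s" if "s \<in> W" for s
  proof -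
    have m': "m = (m-1) + 1" using m1 by simp
    have "FF b h ((m-1) + 1) (P s) = FF b h (m-1) (P s mod b^(m-1)) + FF b h 1 (P s div b^(m-1))"
      by (rule FF_split[OF b1])
    moreover have "P s mod b^(m-1) = rep b (s-1)" unfolding P_def using rep_lt[OF that] by simp
    moreover have "P s div b^(m-1) = 1" unfolding P_def using rep_lt[OF that] b1 by simp
    moreover have "FF b h 1 1 = 1" using h1 b1 by (simp add: FF_def)
    moreover have "FF b h (m-1) (rep b (s-1)) = s - 1"
    proof -
      have "FF b h (m-1) (rep b (s-1)) = FF b h (s-1) (rep b (s-1))"
        using FF_stable[of b h "rep b (s-1)" "s-1" "m-1"] b1 h0 rep_less[OF b1, of "s-1"] rep_lt[OF that] by blast
      thus ?thesis using FF_rep[of b h "s-1"] b1 h1 by simp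
    qed
    ultimately show ?thesis using m' Wb[OF that] by (metis le_add_diff_inverse2)
  qed
  have Hx: "gen_happy b h (P s * b^k + y) = FF b h k y + s" if "s \<in> W" "y < b^k" for s y
  proof -
    have "(P s + 1) * b^k \<le> b^m * b^k" using P_hi[OF that(1)] by (intro mult_right_mono) auto
    hence "P s * b^k + y < b^(k+m)" using that(2) by (simp add: power_add algebra_simps)
    hence "gen_happy b h (P s * b^k + y) = FF b h (k+m) (P s * b^k + y)"
      using gen_happy_FF[of b h] b1 h0 by blast
    also have "\<dots> = FF b h k ((P s * b^k + y) mod b^k) + FF b h m ((P s * b^k + y) div b^k)"
      by (rule FF_split[OF b1])
    also have "(P s * b^k + y) mod b^k = y" using that(2) by simp
    also have "(P s * b^k + y) div b^k = P s" using that(2) b1 by simp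
    finally show ?thesis using FF_P[OF that(1)] by simp
  qed
  define I2 where "I2 s = {P s * b^k .. P s * b^k + b^k - 1}" for s
  define cnt where "cnt s = card {y\<in>{..<b^k}. s + FF b h k y \<in> G}" for s
  have cnt_le: "cnt s \<le> card {x\<in>I2 s. typeC b h C x}" if "s \<in> W" for s
  proof -
    have "cnt s = card ((\<lambda>y. P s * b^k + y) ` {y\<in>{..<b^k}. s + FF b h k y \<in> G})"
      unfolding cnt_def by (rule card_image[symmetric]) (simp add: inj_on_def)
    also have "\<dots> \<le> card {x\<in>I2 s. typeC b h C x}"
    proof (rule card_mono)
      show "finite {x\<in>I2 s. typeC b h C x}" unfolding I2_def by simp
      show "(\<lambda>y. P s * b^k + y) ` {y\<in>{..<b^k}. s + FF b h k y \<in> G} \<subseteq> {x\<in>I2 s. typeC b h C x}"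
      proof
        fix x assume "x \<in> (\<lambda>y. P s * b^k + y) ` {y\<in>{..<b^k}. s + FF b h k y \<in> G}"
        then obtain y where y: "y < b^k" "s + FF b h k y \<in> G" and x: "x = P s * b^k + y" by auto
        have "gen_happy b h x \<in> G" using Hx[OF that y(1)] y(2) x by (simp add: add.commute)
        hence "typeC b h C x" using typeC_step unfolding G_def by blast
        moreover have "x \<in> I2 s" unfolding I2_def x using y(1) by simp
        ultimately show "x \<in> {x\<in>I2 s. typeC b h C x}" by simp
      qed
    qed
    finally show ?thesis .
  qed

  have shiftW: "FF b h k y \<le> x \<and> x - FF b h k y \<in> W"
    if y: "y \<in> Good" and x: "a \<le> x" "x \<le> a + L - 1" for x y
  proof -
    have Dy: "\<bar>D y\<bar> < t" using y Good_iff by simp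
    have f1: "real (FF b h k y) < 3*real m*\<mu> + t" using Dy km unfolding D_def by linarith
    have f2: "real (FF b h k y) > 3*real m*\<mu> - t" using Dy km unfolding D_def by linarith
    have "real (FF b h k y) < real a" using f1 m_le by linarith
    hence le: "FF b h k y \<le> x" using x by linarith
    have xr: "real a \<le> real x" "real x \<le> real a + real L - 1" using x Lpos by linarith+
    have "real (x - FF b h k y) = real x - real (FF b h k y)" using le by simp
    hence "u < real (x - FF b h k y) \<and> real (x - FF b h k y) < w"
      unfolding u_def w_def using f1 f2 xr by linarith
    thus ?thesis using le unfolding W_def by simp
  qed
  have GI: "a \<le> x \<and> x \<le> a + L - 1" if "x \<in> G" for x
    using that Lc unfolding G_def Iac by auto
  have per_y: "N \<le> card {s\<in>W. s + FF b h k y \<in> G}" if y: "y \<in> Good" for y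
  proof -
    have "G \<subseteq> (\<lambda>s. s + FF b h k y) ` {s\<in>W. s + FF b h k y \<in> G}"
    proof
      fix x assume xG: "x \<in> G"
      have sh: "FF b h k y \<le> x \<and> x - FF b h k y \<in> W" using shiftW[OF y] GI[OF xG] by blast
      hence "x = (x - FF b h k y) + FF b h k y" by simp
      thus "x \<in> (\<lambda>s. s + FF b h k y) ` {s\<in>W. s + FF b h k y \<in> G}" using sh xG
        by (metis (mono_tags, lifting) image_eqI mem_Collect_eq)
    qed
    hence "card G \<le> card ((\<lambda>s. s + FF b h k y) ` {s\<in>W. s + FF b h k y \<in> G})"
      by (rule card_mono[rotated]) (use finW in simp)
    also have "\<dots> \<le> card {s\<in>W. s + FF b h k y \<in> G}" by (rule card_image_le) (use finW in simp)
    finally show ?thesis unfolding N_def .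
  qed
  have sumcnt: "N * card Good \<le> (\<Sum>s\<in>W. cnt s)"
  proof -
    have "(\<Sum>s\<in>W. cnt s) = (\<Sum>s\<in>W. \<Sum>y<b^k. if s + FF b h k y \<in> G then 1 else (0::nat))"
      unfolding cnt_def by (intro sum.cong refl card_filter_sum) simp
    also have "\<dots> = (\<Sum>y<b^k. \<Sum>s\<in>W. if s + FF b h k y \<in> G then 1 else (0::nat))"
      by (rule sum.swap)
    also have "\<dots> = (\<Sum>y<b^k. card {s\<in>W. s + FF b h k y \<in> G})"
      by (intro sum.cong refl card_filter_sum[symmetric] finW)
    finally have e: "(\<Sum>s\<in>W. cnt s) = (\<Sum>y<b^k. card {s\<in>W. s + FF b h k y \<in> G})" .
    have "N * card Good = (\<Sum>y\<in>Good. N)" by simp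
    also have "\<dots> \<le> (\<Sum>y\<in>Good. card {s\<in>W. s + FF b h k y \<in> G})"
      by (rule sum_mono) (rule per_y)
    also have "\<dots> \<le> (\<Sum>y<b^k. card {s\<in>W. s + FF b h k y \<in> G})"
      by (rule sum_mono2) (auto simp: Good_iff)
    finally show ?thesis using e by simp
  qed
  have Wne: "W \<noteq> {}"
  proof -
    obtain y0 where "y0 \<in> Good" using Good_ne by blast
    hence "a - FF b h k y0 \<in> W" using shiftW[of y0 a] Lpos by simp
    thus ?thesis by blast
  qed
  obtain s where sW: "s \<in> W" and sbig: "N * card Good \<le> cnt s * card W"
  proof (rule ccontr)
    assume "\<not> thesis"
    hence lt: "\<forall>s\<in>W. cnt s * card W < N * card Good" using that by (meson not_le)
    have "(\<Sum>s\<in>W. cnt s * card W) < (\<Sum>s\<in>W. N * card Good)"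
      by (rule sum_strict_mono[OF finW Wne]) (use lt in blast)
    hence "(\<Sum>s\<in>W. cnt s) * card W < card W * (N * card Good)" by (simp add: sum_distrib_right)
    moreover have "N * card Good * card W \<le> (\<Sum>s\<in>W. cnt s) * card W" using sumcnt by simp
    ultimately show False by (simp add: algebra_simps)
  qed

  have bk0: "b^k > 0" using b1 by simp
  have cardI2: "card (I2 s) = b^k" unfolding I2_def using bk0 by simp
  have strict: "strict_interval b (4*m) (I2 s)"
  proof -
    have sub: "I2 s \<subseteq> {b^(4*m-1) .. b^(4*m) - 1}"
    proof
      fix x assume "x \<in> I2 s"
      hence x: "P s * b^k \<le> x" "x \<le> P s * b^k + b^k - 1" unfolding I2_def by auto
      have "b^(4*m-1) = b^(m-1) * b^k" unfolding k_def using m1 by (simp add: power_add[symmetric])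
      also have "\<dots> \<le> P s * b^k" using P_lo by simp
      finally have lo: "b^(4*m-1) \<le> x" using x by simp
      have "(P s + 1) * b^k \<le> b^m * b^k" using P_hi[OF sW] by (intro mult_right_mono) auto
      also have "\<dots> = b^(4*m)" unfolding k_def by (simp add: power_add[symmetric])
      finally have "P s * b^k + b^k \<le> b^(4*m)" by (simp add: algebra_simps)
      hence hi: "x \<le> b^(4*m) - 1" using x bk0 by linarith
      show "x \<in> {b^(4*m-1) .. b^(4*m) - 1}" using lo hi by simp
    qed
    have "real (card (I2 s)) = real b powr (3 * real (4*m) / 4)"
      unfolding cardI2 k_def using PF4[OF b1, of m] .
    moreover have "int_interval (I2 s)" unfolding int_interval_def I2_def by blast
    ultimately show ?thesis unfolding strict_interval_def using sub m1 by simp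
  qed
  have dens: "typeC_density b h C (I2 s) \<ge> real (cnt s) / real (b^k)"
    unfolding typeC_density_def cardI2 using cnt_le[OF sW] bk0
    by (simp add: divide_right_mono)
  have cW0: "card W > 0" using Wne finW by (simp add: card_gt_0_iff)
  have dens2: "typeC_density b h C (I2 s) \<ge> real N * real (card Good) / (real (card W) * real (b^k))"
  proof -
    have "real N * real (card Good) \<le> real (cnt s) * real (card W)"
      using sbig by (metis of_nat_le_iff of_nat_mult)
    hence "real N * real (card Good) / (real (card W) * real (b^k)) \<le> real (cnt s) / real (b^k)"
      using cW0 bk0 by (simp add: divide_simps)
    thus ?thesis using dens by linarith
  qed
  have ratio: "real L / real (card W) \<ge> 1 - 2 * \<sigma> / sqrt \<mu> * real b powr (- real n / 8)"
  proof -
    have "real a \<le> real b ^ n" using aHi by (metis add_leD1 of_nat_le_iff of_nat_power)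
    hence "t \<le> cc * sqrt (real b ^ n)" unfolding t_def using cc0 by (simp add: mult_left_mono)
    hence "2*t / real L \<le> 2 * (cc * sqrt (real b ^ n)) / real L" using Lpos by (simp add: divide_right_mono)
    also have "cc * sqrt (real b ^ n) / real L = \<sigma> / sqrt \<mu> * real b powr (- real n / 8)"
    proof -
      have "cc * sqrt (real b ^ n) / real L = \<sigma> / sqrt \<mu> * (sqrt (real b ^ n) * real b powr (real n / 8) / real b powr (3 * real n / 4))"
        unfolding cc_def Lr by (simp add: ac_simps)
      thus ?thesis using PF2[OF b1, of n] by simp
    qed
    hence e2: "2 * (cc * sqrt (real b ^ n) / real L) = 2 * (\<sigma> / sqrt \<mu> * real b powr (- real n / 8))"
      by simp
    have "2 * (cc * sqrt (real b ^ n)) / real L = 2 * (cc * sqrt (real b ^ n) / real L)" by simp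
    also note e2
    also have "2 * (\<sigma> / sqrt \<mu> * real b powr (- real n / 8)) = 2 * \<sigma> / sqrt \<mu> * real b powr (- real n / 8)"
      by simp
    finally have tX: "2*t / real L \<le> 2 * \<sigma> / sqrt \<mu> * real b powr (- real n / 8)" .
    have "real L / (real L + 2*t) \<le> real L / real (card W)"
      using cardW cW0 Lpos by (intro divide_left_mono) auto
    moreover have "1 - 2*t/real L \<le> real L / (real L + 2*t)" using ratio_bound Lpos t0 by simp
    ultimately show ?thesis using tX by linarith
  qed
  have Gb: "real (card Good) / real (b^k) \<ge> 1 - real b powr (- real n / 4)"
    using Good_bound bk0 by (simp add: le_divide_eq algebra_simps)
  have beta1: "real b powr (- real n / 4) \<le> 1" unfolding bqinv using bq1 by simp
  have final: "typeC_density b h C (I2 s) \<ge> d * (1 - real b powr (- real n / 4))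
                 * (1 - 2 * \<sigma> / sqrt \<mu> * real b powr (- real n / 8))"
    by (rule final_ineq[OF dens2 _ _ _ _ Gb ratio beta1 dN])
       (use Lpos cW0 bk0 in \<open>auto simp: typeC_density_def\<close>)
  show ?thesis
    apply (rule exI[of _ "4*m"], rule exI[of _ "I2 s"])
    using C3 strict final unfolding a0_def \<mu>_def \<sigma>_def by simp
qed


end
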